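(* Let $n\le l$ be positive integers, let $L_l=\{a_1<a_2<\dots<a_l\}$ be the linearly ordered semilattice of $l$ elements (with $a_ia_j=a_{\min(i,j)}$), and let $t(X)=s(X)$ be an equation over $L_l$ in the variables $X=\{x_1,\dots,x_n\}$ in which every variable $x_1,\dots,x_n$ occurs. Let $\sigma$ be a permutation of $\{1,\dots,n\}$ of the first or of the second kind with respect to this equation. Then the set $Y_\sigma\subseteq L_l^n$ is irreducible, and its coordinate semilattice satisfies $\Gamma(Y_\sigma)\cong L_n$ if $\sigma$ is of the first kind and $\Gamma(Y_\sigma)\cong L_{n-1}$ if $\sigma$ is of the second kind.
   Context: A term $t(X)$ is a commutative word in the letters $x_1,\dots,x_n$; $\mathrm{Var}(t)$ is the set of variables occurring in $t$. An equation is an ordered pair of terms written $t(X)=s(X)$; an inequality $t\le s$ abbreviates the equation $ts=t$. A point $P\in L_l^n$ is a solution of $t(X)=s(X)$ if $t(P)=s(P)$ in $L_l$. For a system $S$ of equations, $V(S)$ is the set of common solutions; a set $Y\subseteq L_l^n$ is algebraic if $Y=V(S)$ for some system $S$, and an algebraic set is irreducible if it is not a proper finite union of other algebraic sets. For an algebraic set $Y$, terms $t,s$ are $\sim_Y$-equivalent if $t(P)=s(P)$ for all $P\in Y$; the set of equivalence classes, with the induced multiplication, is the coordinate semilattice $\Gamma(Y)$. A permutation $\sigma$ of $\{1,\dots,n\}$ is of the first kind (for the equation $t=s$) if $x_{\sigma(1)}\in\mathrm{Var}(t)\cap\mathrm{Var}(s)$, and of the second kind if $x_{\sigma(1)}\in\mathrm{Var}(s)\setminus\mathrm{Var}(t)$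 and $x_{\sigma(2)}\in\mathrm{Var}(t)\setminus\mathrm{Var}(s)$. If $\sigma$ is of the first kind, $Y_\sigma=V(\{x_{\sigma(i)}\le x_{\sigma(i+1)}: 1\le i\le n-1\})$; if $\sigma$ is of the second kind, $Y_\sigma=V(\{x_{\sigma(1)}=x_{\sigma(2)}\}\cup\{x_{\sigma(i)}\le x_{\sigma(i+1)}: 2\le i\le n-1\})$. *)

theory Defs
  imports Main "HOL-Library.Multiset" "HOL-Combinatorics.Permutations"
begin

text \<open>Variables are x_0,...,x_(n-1) (0-indexed).  A wterm (commutative word) is a
  nonempty multiset of variable indices.  L_l = {a_1<...<a_l} is modelled by
  {0..<l} :: nat set with product min.  A point of L_l^n is a list of length n
  with entries < l.\<close>

type_synonym wterm = "nat multiset"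
type_synonym equation = "wterm \<times> wterm"

definition terms :: "nat \<Rightarrow> wterm set" where
  "terms n = {t. t \<noteq> {#} \<and> set_mset t \<subseteq> {0..<n}}"

definition Var :: "wterm \<Rightarrow> nat set" where
  "Var t = set_mset t"

definition points :: "nat \<Rightarrow> nat \<Rightarrow> nat list set" where
  "points n l = {P. length P = n \<and> (\<forall>a\<in>set P. a < l)}"

definition eval :: "wterm \<Rightarrow> nat list \<Rightarrow> nat" where
  "eval t P = Min ((\<lambda>i. P ! i) ` set_mset t)"

text \<open>inequality t \<le> s abbreviates ts = t\<close>
definition ineq :: "wterm \<Rightarrow> wterm \<Rightarrow> equation" where
  "ineq t s = (t + s, t)"

definition V :: "nat \<Rightarrow> nat \<Rightarrow> equation set \<Rightarrow> nat list set" where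
  "V n l S = {P \<in> points n l. \<forall>(t, s)\<in>S. eval t P = eval s P}"

definition algebraic :: "nat \<Rightarrow> nat \<Rightarrow> nat list set \<Rightarrow> bool" where
  "algebraic n l Y \<longleftrightarrow> (\<exists>S. S \<subseteq> terms n \<times> terms n \<and> Y = V n l S)"

definition irreducible_alg :: "nat \<Rightarrow> nat \<Rightarrow> nat list set \<Rightarrow> bool" where
  "irreducible_alg n l Y \<longleftrightarrow> algebraic n l Y \<and>
     \<not> (\<exists>F. finite F \<and> (\<forall>Z\<in>F. algebraic n l Z \<and> Z \<noteq> Y) \<and> Y = \<Union>F)"

definition simY :: "nat \<Rightarrow> nat list set \<Rightarrow> (wterm \<times> wterm) set" where
  "simY n Y = {(t, s). t \<in> terms n \<and> s \<in> terms n \<and> (\<forall>P\<in>Y. eval t P = eval s P)}"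

definition Gamma :: "nat \<Rightarrow> nat list set \<Rightarrow> wterm set set" where
  "Gamma n Y = terms n // simY n Y"

definition Gamma_mult :: "nat \<Rightarrow> nat list set \<Rightarrow> wterm set \<Rightarrow> wterm set \<Rightarrow> wterm set" where
  "Gamma_mult n Y A B = (\<Union>a\<in>A. \<Union>b\<in>B. simY n Y `` {a + b})"

definition Gamma_iso_L :: "nat \<Rightarrow> nat list set \<Rightarrow> nat \<Rightarrow> bool" where
  "Gamma_iso_L n Y m \<longleftrightarrow> (\<exists>f. bij_betw f (Gamma n Y) {0..<m} \<and>
     (\<forall>A\<in>Gamma n Y. \<forall>B\<in>Gamma n Y. f (Gamma_mult n Y A B) = min (f A) (f B)))"

definition first_kind :: "equation \<Rightarrow> (nat \<Rightarrow> nat) \<Rightarrow> bool" where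
  "first_kind e \<sigma> \<longleftrightarrow> \<sigma> 0 \<in> Var (fst e) \<inter> Var (snd e)"

definition second_kind :: "equation \<Rightarrow> (nat \<Rightarrow> nat) \<Rightarrow> bool" where
  "second_kind e \<sigma> \<longleftrightarrow> \<sigma> 0 \<in> Var (snd e) - Var (fst e) \<and> \<sigma> 1 \<in> Var (fst e) - Var (snd e)"

definition Y_first :: "nat \<Rightarrow> nat \<Rightarrow> (nat \<Rightarrow> nat) \<Rightarrow> nat list set" where
  "Y_first n l \<sigma> = V n l {ineq {#\<sigma> i#} {#\<sigma> (Suc i)#} | i. i + 1 < n}"

definition Y_second :: "nat \<Rightarrow> nat \<Rightarrow> (nat \<Rightarrow> nat) \<Rightarrow> nat list set" where
  "Y_second n l \<sigma> = V n l ({({#\<sigma> 0#}, {#\<sigma> 1#})} \<union>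
      {ineq {#\<sigma> i#} {#\<sigma> (Suc i)#} | i. 1 \<le> i \<and> i + 1 < n})"

end

theory Submission
  imports Defs
begin

lemma terms_fin: "t \<in> terms n \<Longrightarrow> finite (set_mset t) \<and> set_mset t \<noteq> {} \<and> set_mset t \<subseteq> {0..<n}"
  by (auto simp: terms_def)

lemma eval_mono_map:
  assumes "t \<in> terms n" "mono \<phi>" "\<forall>j<n. P!j = \<phi> (g!j)"
  shows "eval t P = \<phi> (eval t g)"
proof -
  have f: "finite ((!) g ` set_mset t)" "(!) g ` set_mset t \<noteq> {}"
    using terms_fin[OF assms(1)] by auto
  have "\<phi> (eval t g) = Min (\<phi> ` ((!) g ` set_mset t))"
    unfolding eval_def using mono_Min_commute[OF assms(2) f] .
  also have "\<phi> ` ((!) g ` set_mset t) = (\<lambda>j. \<phi> (g ! j)) ` set_mset t"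
    by (simp add: image_image)
  also have "\<dots> = (!) P ` set_mset t"
  proof (rule image_cong)
    fix j assume "j \<in> set_mset t"
    then have "j < n" using terms_fin[OF assms(1)] by auto
    then show "\<phi> (g ! j) = P ! j" using assms(3) by simp
  qed simp
  finally show ?thesis by (simp add: eval_def)
qed

lemma eval_sum:
  assumes "a \<in> terms n" "b \<in> terms n"
  shows "eval (a + b) g = min (eval a g) (eval b g)"
  using terms_fin[OF assms(1)] terms_fin[OF assms(2)]
  by (simp add: eval_def image_Un Min_Un)

lemma eval_single[simp]: "eval {#a#} g = g ! a"
  by (simp add: eval_def)

lemma eval_pair[simp]: "eval {#a, b#} g = min (g ! a) (g ! b)"
  by (simp add: eval_def)

definition generic :: "nat \<Rightarrow> nat list \<Rightarrow> nat list set \<Rightarrow> bool" where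
  "generic n g Y \<longleftrightarrow> (\<forall>P\<in>Y. \<forall>t\<in>terms n. \<forall>s\<in>terms n. eval t g = eval s g \<longrightarrow> eval t P = eval s P)"

lemma irred_generic:
  assumes alg: "algebraic n l Y" and gY: "g \<in> Y" and gen: "generic n g Y"
  shows "irreducible_alg n l Y"
  unfolding irreducible_alg_def
proof (intro conjI alg notI)
  assume "\<exists>F. finite F \<and> (\<forall>Z\<in>F. algebraic n l Z \<and> Z \<noteq> Y) \<and> Y = \<Union> F"
  then obtain F where F: "\<forall>Z\<in>F. algebraic n l Z \<and> Z \<noteq> Y" "Y = \<Union> F" by blast
  then obtain Z where Z: "Z \<in> F" "g \<in> Z" using gY by blast
  then obtain S where S: "S \<subseteq> terms n \<times> terms n" "Z = V n l S"
    using F(1) unfolding algebraic_def by blast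
  obtain S0 where S0: "Y = V n l S0" using alg unfolding algebraic_def by blast
  have "Y \<subseteq> Z"
  proof
    fix P assume P: "P \<in> Y"
    have "P \<in> points n l" using P S0 by (simp add: V_def)
    moreover have "\<forall>(t, s)\<in>S. eval t P = eval s P"
    proof (clarify)
      fix t s assume ts: "(t, s) \<in> S"
      have "eval t g = eval s g" using Z(2) S(2) ts by (auto simp: V_def)
      then show "eval t P = eval s P" using gen P ts S(1) unfolding generic_def by blast
    qed
    ultimately show "P \<in> Z" using S(2) by (simp add: V_def)
  qed
  moreover have "Z \<subseteq> Y" using F(2) Z(1) by blast
  ultimately show False using F(1) Z(1) by blast
qed

lemma iso_generic:
  assumes gY: "g \<in> Y" and gen: "generic n g Y"
    and img: "(\<lambda>t. eval t g) ` terms n = {0..<m}"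
  shows "Gamma_iso_L n Y m"
proof -
  define C where "C a = {t \<in> terms n. eval t g = eval a g}" for a
  have simI: "(t, s) \<in> simY n Y \<longleftrightarrow> t \<in> terms n \<and> s \<in> terms n \<and> eval t g = eval s g" for t s
  proof
    assume "(t, s) \<in> simY n Y" then show "t \<in> terms n \<and> s \<in> terms n \<and> eval t g = eval s g"
      using gY unfolding simY_def by blast
  next
    assume a: "t \<in> terms n \<and> s \<in> terms n \<and> eval t g = eval s g"
    have "\<forall>P\<in>Y. eval t P = eval s P" using gen a unfolding generic_def by blast
    then show "(t, s) \<in> simY n Y" using a unfolding simY_def by blast
  qed
  have sim: "simY n Y = {(t, s). t \<in> terms n \<and> s \<in> terms n \<and> eval t g = eval s g}"
    using simI by auto
  have simC: "simY n Y `` {a} = C a" if "a \<in> terms n" for a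
    unfolding sim C_def using that by auto
  have G: "Gamma n Y = C ` terms n"
    unfolding Gamma_def quotient_def using simC by auto
  define f where "f A = eval (SOME t. t \<in> A) g" for A
  have fC: "f (C a) = eval a g" if "a \<in> terms n" for a
  proof -
    have "a \<in> C a" using that by (simp add: C_def)
    then have "(SOME t. t \<in> C a) \<in> C a" by (rule someI)
    then show ?thesis by (simp add: f_def C_def)
  qed
  have inj: "inj_on f (Gamma n Y)"
    unfolding G inj_on_def using fC by (auto simp: C_def)
  have im: "f ` Gamma n Y = {0..<m}"
  proof -
    have "f ` C ` terms n = (\<lambda>t. eval t g) ` terms n"
      unfolding image_image using fC by (intro image_cong) auto
    then show ?thesis using G img by simp
  qed
  have mult: "f (Gamma_mult n Y A B) = min (f A) (f B)"
    if AB: "A \<in> Gamma n Y" "B \<in> Gamma n Y" for A B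
  proof -
    obtain a b where ab: "a \<in> terms n" "b \<in> terms n" "A = C a" "B = C b"
      using AB G by auto
    have abt: "a + b \<in> terms n" using ab by (auto simp: terms_def)
    have "Gamma_mult n Y A B = C (a + b)"
    proof -
      have h0: "C (a' + b') = C (a + b)" if "a' \<in> C a" "b' \<in> C b" for a' b'
      proof -
        have "a' \<in> terms n" "b' \<in> terms n" "eval a' g = eval a g" "eval b' g = eval b g"
          using that by (auto simp: C_def)
        then have "eval (a' + b') g = eval (a + b) g" using ab eval_sum by metis
        then show ?thesis by (simp add: C_def)
      qed
      have h2: "a \<in> C a" "b \<in> C b" using ab by (auto simp: C_def)
      have h3: "simY n Y `` {a' + b'} = C (a' + b')" if "a' \<in> C a" "b' \<in> C b" for a' b'
      proof -
        have "a' + b' \<in> terms n" using that by (auto simp: C_def terms_def)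
        then show ?thesis by (rule simC)
      qed
      have h1: "simY n Y `` {a' + b'} = C (a + b)" if "a' \<in> C a" "b' \<in> C b" for a' b'
        using h0[OF that] h3[OF that] by simp
      show ?thesis unfolding Gamma_mult_def ab
      proof (rule equalityI)
        show "(\<Union>a'\<in>C a. \<Union>b'\<in>C b. simY n Y `` {a' + b'}) \<subseteq> C (a + b)"
          using h1 by (intro UN_least) simp
        show "C (a + b) \<subseteq> (\<Union>a'\<in>C a. \<Union>b'\<in>C b. simY n Y `` {a' + b'})"
          using h1[OF h2] h2 by blast
      qed
    qed
    then show ?thesis using fC abt ab eval_sum by simp
  qed
  have "bij_betw f (Gamma n Y) {0..<m}" unfolding bij_betw_def using inj im by (rule conjI)
  then show ?thesis unfolding Gamma_iso_L_def using mult by (intro exI[of _ f] conjI ballI)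
qed

lemma chain_mono:
  assumes "\<forall>i. k \<le> i \<and> i + 1 < n \<longrightarrow> (f i :: nat) \<le> f (Suc i)"
  shows "k \<le> i \<Longrightarrow> i \<le> j \<Longrightarrow> j < n \<Longrightarrow> f i \<le> f j"
proof (induction j)
  case 0 then show ?case by simp
next
  case (Suc j)
  show ?case
  proof (cases "i = Suc j")
    case False
    then have "f i \<le> f j" using Suc by simp
    also have "f j \<le> f (Suc j)" using assms Suc False by auto
    finally show ?thesis .
  qed simp
qed

lemma eval_plus2[simp]: "eval ({#a#} + {#b#}) g = min (g ! a) (g ! b)"
  by (simp add: eval_def)

lemma perm_facts:
  fixes \<sigma> :: "nat \<Rightarrow> nat"
  assumes "\<sigma> permutes {0..<n}"
  shows "\<And>i. i < n \<Longrightarrow> \<sigma> i < n" "\<And>i. i < n \<Longrightarrow> inv \<sigma> i < n"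
    "\<And>i. \<sigma> (inv \<sigma> i) = i" "\<And>i. inv \<sigma> (\<sigma> i) = i"
    "\<And>i. i \<ge> n \<Longrightarrow> \<sigma> i = i"
proof -
  fix i show "i < n \<Longrightarrow> \<sigma> i < n" using permutes_in_image[OF assms, of i] by auto
  fix i show "i < n \<Longrightarrow> inv \<sigma> i < n" using permutes_in_image[OF permutes_inv[OF assms], of i] by auto
  show "\<And>i. \<sigma> (inv \<sigma> i) = i" "\<And>i. inv \<sigma> (\<sigma> i) = i" using permutes_inverses[OF assms] by auto
  show "\<And>i. i \<ge> n \<Longrightarrow> \<sigma> i = i" using permutes_not_in[OF assms] by simp
qed

lemma single_terms: "a < n \<Longrightarrow> {#a#} \<in> terms n"
  by (simp add: terms_def)

lemma pair_terms: "a < n \<Longrightarrow> b < n \<Longrightarrow> {#a#} + {#b#} \<in> terms n"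
  by (simp add: terms_def)

lemma eval_in_img:
  assumes "t \<in> terms n" shows "\<exists>j\<in>set_mset t. eval t g = g ! j \<and> j < n"
proof -
  have "eval t g \<in> (!) g ` set_mset t"
    unfolding eval_def using terms_fin[OF assms] by (intro Min_in) auto
  then obtain j where "j \<in># t" "eval t g = g ! j" by auto
  moreover have "j < n" using terms_fin[OF assms] \<open>j \<in># t\<close> by auto
  ultimately show ?thesis by blast
qed

lemma first_case:
  assumes "1 \<le> n" "n \<le> l" "\<sigma> permutes {0..<n}"
  shows "irreducible_alg n l (Y_first n l \<sigma>) \<and> Gamma_iso_L n (Y_first n l \<sigma>) n"
proof -
  note pf = perm_facts[OF assms(3)]
  define S where "S = {ineq {#\<sigma> i#} {#\<sigma> (Suc i)#} | i. i + 1 < n}"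
  have YS: "Y_first n l \<sigma> = V n l S" by (simp add: Y_first_def S_def)
  have Sin: "S \<subseteq> terms n \<times> terms n"
    unfolding S_def ineq_def using pf(1) by (auto simp: terms_def)
  have alg: "algebraic n l (Y_first n l \<sigma>)"
    unfolding algebraic_def using Sin YS by blast
  define g where "g = map (\<lambda>j. inv \<sigma> j) [0..<n]"
  have gj: "j < n \<Longrightarrow> g ! j = inv \<sigma> j" for j by (simp add: g_def)
  have gY: "g \<in> Y_first n l \<sigma>"
    unfolding YS V_def
  proof (intro CollectI conjI ballI)
    show "g \<in> points n l" unfolding points_def g_def using pf(2) assms(2) by fastforce
    fix e assume "e \<in> S"
    then obtain i where i: "i + 1 < n" "e = ineq {#\<sigma> i#} {#\<sigma> (Suc i)#}" unfolding S_def by blast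
    have "eval ({#\<sigma> i#} + {#\<sigma> (Suc i)#}) g = eval {#\<sigma> i#} g"
      using i pf gj by simp
    then show "case e of (t, s) \<Rightarrow> eval t g = eval s g" using i(2) by (simp add: ineq_def)
  qed
  have gen: "generic n g (Y_first n l \<sigma>)"
    unfolding generic_def
  proof (intro ballI impI)
    fix P t s assume P: "P \<in> Y_first n l \<sigma>" and ts: "t \<in> terms n" "s \<in> terms n"
      and eq: "eval t g = eval s g"
    have step: "\<forall>i. 0 \<le> i \<and> i + 1 < n \<longrightarrow> P ! \<sigma> i \<le> P ! \<sigma> (Suc i)"
    proof (intro allI impI)
      fix i assume "0 \<le> i \<and> i + 1 < n"
      then have "ineq {#\<sigma> i#} {#\<sigma> (Suc i)#} \<in> S" unfolding S_def by auto
      then have "eval ({#\<sigma> i#} + {#\<sigma> (Suc i)#}) P = eval {#\<sigma> i#} P"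
        using P unfolding YS V_def ineq_def by auto
      then show "P ! \<sigma> i \<le> P ! \<sigma> (Suc i)" by simp
    qed
    define \<phi> where "\<phi> k = P ! \<sigma> (min k (n - 1))" for k
    have mono: "mono \<phi>"
    proof (rule monoI)
      fix x y :: nat assume "x \<le> y"
      then show "\<phi> x \<le> \<phi> y" unfolding \<phi>_def
        using chain_mono[OF step, of "min x (n - 1)" "min y (n - 1)"] assms(1) by simp
    qed
    have fac: "\<forall>j<n. P ! j = \<phi> (g ! j)"
    proof (intro allI impI)
      fix j assume j: "j < n"
      have "inv \<sigma> j < n" using pf(2) j .
      then show "P ! j = \<phi> (g ! j)" unfolding \<phi>_def using gj[OF j] pf(3) by simp
    qed
    show "eval t P = eval s P"
      using eval_mono_map[OF ts(1) mono fac] eval_mono_map[OF ts(2) mono fac] eq by simp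
  qed
  have img: "(\<lambda>t. eval t g) ` terms n = {0..<n}"
  proof (rule equalityI)
    show "(\<lambda>t. eval t g) ` terms n \<subseteq> {0..<n}"
    proof
      fix x assume "x \<in> (\<lambda>t. eval t g) ` terms n"
      then obtain t where t: "t \<in> terms n" "x = eval t g" by blast
      then obtain j where "j < n" "x = g ! j" using eval_in_img by blast
      then show "x \<in> {0..<n}" using gj pf(2) by simp
    qed
    show "{0..<n} \<subseteq> (\<lambda>t. eval t g) ` terms n"
    proof
      fix i assume "i \<in> {0..<n}"
      then have i: "i < n" by simp
      have "eval {#\<sigma> i#} g = i" using gj[OF pf(1)[OF i]] pf(4) by simp
      then show "i \<in> (\<lambda>t. eval t g) ` terms n"
        using single_terms[OF pf(1)[OF i]] by (metis image_eqI)
    qed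
  qed
  show ?thesis using irred_generic[OF alg gY gen] iso_generic[OF gY gen img] by blast
qed

lemma second_case:
  fixes \<sigma> :: "nat \<Rightarrow> nat"
  assumes "2 \<le> n" "n \<le> l" "\<sigma> permutes {0..<n}"
  shows "irreducible_alg n l (Y_second n l \<sigma>) \<and> Gamma_iso_L n (Y_second n l \<sigma>) (n - 1)"
proof -
  note pf = perm_facts[OF assms(3)]
  define S where "S = {({#\<sigma> 0#}, {#\<sigma> 1#})} \<union>
      {ineq {#\<sigma> i#} {#\<sigma> (Suc i)#} | i. 1 \<le> i \<and> i + 1 < n}"
  have YS: "Y_second n l \<sigma> = V n l S" by (simp add: Y_second_def S_def)
  have Sin: "S \<subseteq> terms n \<times> terms n"
    unfolding S_def ineq_def using pf(1) assms(1) by (auto simp: terms_def)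
  have alg: "algebraic n l (Y_second n l \<sigma>)"
    unfolding algebraic_def using Sin YS by blast
  define g where "g = map (\<lambda>j. inv \<sigma> j - 1) [0..<n]"
  have gj: "j < n \<Longrightarrow> g ! j = inv \<sigma> j - 1" for j by (simp add: g_def)
  have s0: "\<sigma> 0 < n" "\<sigma> 1 < n" using pf(1) assms(1) by auto
  have gY: "g \<in> Y_second n l \<sigma>"
    unfolding YS V_def
  proof (intro CollectI conjI ballI)
    show "g \<in> points n l" unfolding points_def g_def using pf(2) assms(2) by fastforce
    fix e assume "e \<in> S"
    then consider "e = ({#\<sigma> 0#}, {#\<sigma> 1#})"
      | i where "1 \<le> i" "i + 1 < n" "e = ineq {#\<sigma> i#} {#\<sigma> (Suc i)#}" unfolding S_def by blast
    then show "case e of (t, s) \<Rightarrow> eval t g = eval s g"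
    proof cases
      case 1
      then show ?thesis using gj[OF s0(1)] gj[OF s0(2)] pf(4) by simp
    next
      case (2 i)
      have "eval ({#\<sigma> i#} + {#\<sigma> (Suc i)#}) g = eval {#\<sigma> i#} g"
        using 2 pf gj by simp
      then show ?thesis using 2(3) by (simp add: ineq_def)
    qed
  qed
  have gen: "generic n g (Y_second n l \<sigma>)"
    unfolding generic_def
  proof (intro ballI impI)
    fix P t s assume P: "P \<in> Y_second n l \<sigma>" and ts: "t \<in> terms n" "s \<in> terms n"
      and eq: "eval t g = eval s g"
    have step: "\<forall>i. 1 \<le> i \<and> i + 1 < n \<longrightarrow> P ! \<sigma> i \<le> P ! \<sigma> (Suc i)"
    proof (intro allI impI)
      fix i assume "1 \<le> i \<and> i + 1 < n"
      then have "ineq {#\<sigma> i#} {#\<sigma> (Suc i)#} \<in> S" unfolding S_def by auto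
      then have "eval ({#\<sigma> i#} + {#\<sigma> (Suc i)#}) P = eval {#\<sigma> i#} P"
        using P unfolding YS V_def ineq_def by auto
      then show "P ! \<sigma> i \<le> P ! \<sigma> (Suc i)" by simp
    qed
    have e01: "P ! \<sigma> 0 = P ! \<sigma> 1"
    proof -
      have "({#\<sigma> 0#}, {#\<sigma> 1#}) \<in> S" unfolding S_def by auto
      then have "eval {#\<sigma> 0#} P = eval {#\<sigma> 1#} P" using P unfolding YS V_def by auto
      then show ?thesis by simp
    qed
    define \<phi> where "\<phi> k = P ! \<sigma> (min (k + 1) (n - 1))" for k
    have mono: "mono \<phi>"
    proof (rule monoI)
      fix x y :: nat assume "x \<le> y"
      then show "\<phi> x \<le> \<phi> y" unfolding \<phi>_def
        using chain_mono[OF step, of "min (x + 1) (n - 1)" "min (y + 1) (n - 1)"] assms(1) by simp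
    qed
    have fac: "\<forall>j<n. P ! j = \<phi> (g ! j)"
    proof (intro allI impI)
      fix j assume j: "j < n"
      have ij: "inv \<sigma> j < n" using pf(2) j .
      show "P ! j = \<phi> (g ! j)"
      proof (cases "inv \<sigma> j = 0")
        case True
        then have "j = \<sigma> 0" using pf(3)[of j] by simp
        moreover have "min (0 + 1) (n - 1) = 1" using assms(1) by simp
        ultimately show ?thesis unfolding \<phi>_def using gj[OF j] True e01 by simp
      next
        case False
        then have "min (inv \<sigma> j - 1 + 1) (n - 1) = inv \<sigma> j" using ij by simp
        then show ?thesis unfolding \<phi>_def using gj[OF j] pf(3)[of j] by simp
      qed
    qed
    show "eval t P = eval s P"
      using eval_mono_map[OF ts(1) mono fac] eval_mono_map[OF ts(2) mono fac] eq by simp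
  qed
  have img: "(\<lambda>t. eval t g) ` terms n = {0..<n - 1}"
  proof (rule equalityI)
    show "(\<lambda>t. eval t g) ` terms n \<subseteq> {0..<n - 1}"
    proof
      fix x assume "x \<in> (\<lambda>t. eval t g) ` terms n"
      then obtain t where t: "t \<in> terms n" "x = eval t g" by blast
      then obtain j where j: "j < n" "x = g ! j" using eval_in_img by blast
      have "inv \<sigma> j < n" using pf(2) j(1) .
      then show "x \<in> {0..<n - 1}" using gj[OF j(1)] j(2) assms(1) by simp
    qed
    show "{0..<n - 1} \<subseteq> (\<lambda>t. eval t g) ` terms n"
    proof
      fix i assume "i \<in> {0..<n - 1}"
      then have i: "Suc i < n" by simp
      have "eval {#\<sigma> (Suc i)#} g = i" using gj[OF pf(1)[OF i]] pf(4) by simp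
      then show "i \<in> (\<lambda>t. eval t g) ` terms n"
        using single_terms[OF pf(1)[OF i]] by (metis image_eqI)
    qed
  qed
  show ?thesis using irred_generic[OF alg gY gen] iso_generic[OF gY gen img] by blast
qed

theorem lemma1:
  fixes n l :: nat and t s :: "nat multiset" and \<sigma> :: "nat \<Rightarrow> nat"
  assumes "1 \<le> n" and "n \<le> l"
    and "t \<in> terms n" and "s \<in> terms n"
    and "Var t \<union> Var s = {0..<n}"
    and "\<sigma> permutes {0..<n}"
  shows "(first_kind (t, s) \<sigma> \<longrightarrow>
            irreducible_alg n l (Y_first n l \<sigma>) \<and> Gamma_iso_L n (Y_first n l \<sigma>) n) \<and>
         (second_kind (t, s) \<sigma> \<longrightarrow>
            irreducible_alg n l (Y_second n l \<sigma>) \<and> Gamma_iso_L n (Y_second n l \<sigma>) (n - 1))"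
proof (rule conjI; rule impI)
  show "irreducible_alg n l (Y_first n l \<sigma>) \<and> Gamma_iso_L n (Y_first n l \<sigma>) n"
    using first_case[OF assms(1,2,6)] .
next
  assume sk: "second_kind (t, s) \<sigma>"
  have "2 \<le> n"
  proof (rule ccontr)
    assume "\<not> 2 \<le> n"
    then have n1: "n = 1" using assms(1) by simp
    then have "\<sigma> 1 = 1" using perm_facts(5)[OF assms(6)] by simp
    moreover have "\<sigma> 1 \<in> Var t" using sk by (simp add: second_kind_def)
    ultimately show False using assms(3) n1 by (auto simp: terms_def Var_def)
  qed
  then show "irreducible_alg n l (Y_second n l \<sigma>) \<and> Gamma_iso_L n (Y_second n l \<sigma>) (n - 1)"
    using second_case[OF _ assms(2,6)] by blast
qed

end
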